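(* Let $n\ge1$ and $\alpha,\beta,u,v\in V_n$. If the Wang tile $(\alpha,\beta,u,v)$ (right $\alpha$, top $\beta$, left $u$, bottom $v$) belongs to $\mathcal T'_n$, then there exists a unique valid rectangular pattern with tiles in $\mathcal T'_n$ whose right, top, left and bottom labels are respectively $\tau_n(\alpha)$, $\tau_n(\beta)$, $\tau_n(u)$ and $\tau_n(v)$.
   Context: Write $\bar m=m+1$. $V_n=\{(v_0,v_1,v_2)\in\mathbb{Z}^3: 0\le v_0\le v_1\le 1,\ v_1\le v_2\le n+1\}$, elements written as words $v_0v_1v_2$. A Wang tile is $t=(a,b,c,d)$ with $\mathrm{RIGHT}(t)=a$, $\mathrm{TOP}(t)=b$, $\mathrm{LEFT}(t)=c$, $\mathrm{BOTTOM}(t)=d$; $\hat t=(b,a,d,c)$, $\hat S=\{\hat t:t\in S\}$. Define (as (right, top, left, bottom)): $W_n=\{(11(i+1),11(j+1),11i,11j):1\le i,j\le n\}$; $B'_n=\{(00(i+1),111,00i,11n):0\le i\le n\}$; $G_n=\{(01(i+1),111,00i,11(n+1)):0\le i\le n\}$; $Y_n=\{(01(i+1),112,01i,11(n+1)):1\le i\le n\}$; $A_n=\{(00(i+1),112,01i,11n):1\le i\le n\}$; $J'_n=\{((0,k,l),(0,r,s),(0,s,r+n),(0,l,k+n)):(k,l),(r,s)\in\{(0,0),(0,1),(1,1)\}\}$. $\mathcal T'_n=W_n\cup B'_n\cup G_n\cup Y_n\cup A_n\cup\hat B'_n\cup\hat G_n\cup\hat Y_n\cup\hat A_n\cup J'_n$.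 A rectangular pattern is valid if adjacent tiles agree on common edges; its bottom (top) labels are those of its bottom (top) row read left to right, its left (right) labels those of its left (right) column read bottom to top. $\tau_n:V_n\to V_n^*$ is $\tau_n(xyz)=(0,x-y+1,n)\cdot(11n)^{z-x-1}\cdot(11\bar n)^{n+1-z}$ if $x\ne z$, and $\tau_n(xyz)=(0,x-y+1,n+1)\cdot(11\bar n)^{n-z}$ if $x=z$. *)

theory Defs
  imports Main
begin

text \<open>Labels are integer triples v0 v1 v2 (the word v0v1v2).
  A Wang tile is (right, top, left, bottom).\<close>

type_synonym label = "int \<times> int \<times> int"
type_synonym tile = "label \<times> label \<times> label \<times> label"

definition V :: "nat \<Rightarrow> label set" where
  "V n = {(v0, v1, v2). 0 \<le> v0 \<and> v0 \<le> v1 \<and> v1 \<le> 1 \<and> v1 \<le> v2 \<and> v2 \<le> int n + 1}"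

fun RIGHT :: "tile \<Rightarrow> label" where "RIGHT (a, b, c, d) = a"
fun TOP :: "tile \<Rightarrow> label" where "TOP (a, b, c, d) = b"
fun LEFT :: "tile \<Rightarrow> label" where "LEFT (a, b, c, d) = c"
fun BOTTOM :: "tile \<Rightarrow> label" where "BOTTOM (a, b, c, d) = d"

fun hat :: "tile \<Rightarrow> tile" where "hat (a, b, c, d) = (b, a, d, c)"

definition W :: "nat \<Rightarrow> tile set" where
  "W n = {((1,1,i+1), (1,1,j+1), (1,1,i), (1,1,j)) | i j. 1 \<le> i \<and> i \<le> int n \<and> 1 \<le> j \<and> j \<le> int n}"

definition B' :: "nat \<Rightarrow> tile set" where
  "B' n = {((0,0,i+1), (1,1,1), (0,0,i), (1,1,int n)) | i. 0 \<le> i \<and> i \<le> int n}"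

definition G :: "nat \<Rightarrow> tile set" where
  "G n = {((0,1,i+1), (1,1,1), (0,0,i), (1,1,int n + 1)) | i. 0 \<le> i \<and> i \<le> int n}"

definition Y :: "nat \<Rightarrow> tile set" where
  "Y n = {((0,1,i+1), (1,1,2), (0,1,i), (1,1,int n + 1)) | i. 1 \<le> i \<and> i \<le> int n}"

definition A :: "nat \<Rightarrow> tile set" where
  "A n = {((0,0,i+1), (1,1,2), (0,1,i), (1,1,int n)) | i. 1 \<le> i \<and> i \<le> int n}"

definition J' :: "nat \<Rightarrow> tile set" where
  "J' n = {((0,k,l), (0,r,s), (0,s,r + int n), (0,l,k + int n)) | k l r s.
            (k, l) \<in> {(0,0),(0,1),(1,1)} \<and> (r, s) \<in> {(0,0),(0,1),(1,1)}}"

definition T' :: "nat \<Rightarrow> tile set" where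
  "T' n = W n \<union> B' n \<union> G n \<union> Y n \<union> A n
          \<union> hat ` B' n \<union> hat ` G n \<union> hat ` Y n \<union> hat ` A n \<union> J' n"

fun tau :: "nat \<Rightarrow> label \<Rightarrow> label list" where
  "tau n (x, y, z) =
     (if x \<noteq> z then
        (0, x - y + 1, int n) # replicate (nat (z - x - 1)) (1, 1, int n)
          @ replicate (nat (int n + 1 - z)) (1, 1, int n + 1)
      else (0, x - y + 1, int n + 1) # replicate (nat (int n - z)) (1, 1, int n + 1))"

text \<open>A rectangular pattern is a list of rows, listed from bottom to top;
  each row is a list of tiles listed from left to right.\<close>
definition valid_pattern :: "tile set \<Rightarrow> tile list list \<Rightarrow> bool" where
  "valid_pattern S P \<longleftrightarrow>
     P \<noteq> [] \<and> hd P \<noteq> [] \<and> (\<forall>row \<in> set P. length row = length (hd P)) \<and>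
     (\<forall>row \<in> set P. set row \<subseteq> S) \<and>
     (\<forall>i < length P. \<forall>j. j + 1 < length (hd P) \<longrightarrow> RIGHT (P ! i ! j) = LEFT (P ! i ! (j + 1))) \<and>
     (\<forall>i. i + 1 < length P \<longrightarrow> (\<forall>j < length (hd P). TOP (P ! i ! j) = BOTTOM (P ! (i + 1) ! j)))"

definition bottom_labels :: "tile list list \<Rightarrow> label list" where
  "bottom_labels P = map BOTTOM (hd P)"
definition top_labels :: "tile list list \<Rightarrow> label list" where
  "top_labels P = map TOP (last P)"
definition left_labels :: "tile list list \<Rightarrow> label list" where
  "left_labels P = map (\<lambda>row. LEFT (hd row)) P"
definition right_labels :: "tile list list \<Rightarrow> label list" where
  "right_labels P = map (\<lambda>row. RIGHT (last row)) P"

end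

theory Submission
  imports Defs
begin


lemma tau_len:
  assumes "n \<ge> 1" "(x,y,z) \<in> V n"
  shows "length (tau n (x,y,z)) = nat (int n + 1 - x)"
  using assms unfolding V_def by auto

lemma tau_nth:
  assumes "n \<ge> 1" "(x,y,z) \<in> V n" "i < nat (int n + 1 - x)"
  shows "tau n (x,y,z) ! i = (if i = 0 then (0, x - y + 1, int n + (if z = x then 1 else 0))
      else (1, 1, int n + (if int i + x + 1 > z then 1 else 0)))"
proof (cases "i = 0")
  case True then show ?thesis by auto
next
  case False
  then obtain k where k: "i = Suc k" by (cases i) auto
  show ?thesis
  proof (cases "x = z")
    case True
    then show ?thesis using assms k unfolding V_def by (auto simp: nth_Cons')
  next
    case F: False
    have "tau n (x,y,z) ! i = (replicate (nat (z - x - 1)) (1, 1, int n)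
          @ replicate (nat (int n + 1 - z)) (1, 1, int n + 1)) ! k" using F k by simp
    also have "\<dots> = (if k < nat (z - x - 1) then (1,1,int n) else (1,1,int n + 1))"
      using assms k F unfolding V_def by (auto simp: nth_append)
    finally show ?thesis using k F assms unfolding V_def by auto
  qed
qed



definition mk :: "nat \<Rightarrow> nat \<Rightarrow> (nat \<Rightarrow> nat \<Rightarrow> tile) \<Rightarrow> tile list list" where
  "mk h w f = map (\<lambda>i. map (f i) [0..<w]) [0..<h]"

lemma mk_valid:
  assumes "h > 0" "w > 0" "\<forall>i<h. \<forall>j<w. f i j \<in> S"
    "\<forall>i<h. \<forall>j. j + 1 < w \<longrightarrow> RIGHT (f i j) = LEFT (f i (j+1))"
    "\<forall>i. i + 1 < h \<longrightarrow> (\<forall>j<w. TOP (f i j) = BOTTOM (f (i+1) j))"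
  shows "valid_pattern S (mk h w f)"
proof -
  have hd: "hd (mk h w f) = map (f 0) [0..<w]" using assms(1) unfolding mk_def
    by (simp add: hd_map upt_conv_Cons)
  show ?thesis unfolding valid_pattern_def hd using assms
    unfolding mk_def by auto
qed

lemma mk_labels:
  assumes "h > 0" "w > 0"
  shows "right_labels (mk h w f) = map (\<lambda>i. RIGHT (f i (w - 1))) [0..<h]"
    "top_labels (mk h w f) = map (\<lambda>j. TOP (f (h - 1) j)) [0..<w]"
    "left_labels (mk h w f) = map (\<lambda>i. LEFT (f i 0)) [0..<h]"
    "bottom_labels (mk h w f) = map (\<lambda>j. BOTTOM (f 0 j)) [0..<w]"
  using assms unfolding mk_def right_labels_def top_labels_def left_labels_def bottom_labels_def
  by (simp_all add: last_map hd_map)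



definition det :: "tile set \<Rightarrow> bool" where
  "det S \<longleftrightarrow> (\<forall>t\<in>S. \<forall>t'\<in>S. LEFT t = LEFT t' \<and> BOTTOM t = BOTTOM t' \<longrightarrow> t = t')"

lemma vp_row: assumes "valid_pattern S P" "i < length P" shows "length (P!i) = length (hd P)"
proof -
  have "\<forall>row \<in> set P. length row = length (hd P)" using assms(1) unfolding valid_pattern_def by (rule conjunct1[OF conjunct2[OF conjunct2]])
  then show ?thesis using nth_mem[OF assms(2)] by blast
qed
lemma vp_mem: assumes "valid_pattern S P" "i < length P" "j < length (hd P)" shows "P!i!j \<in> S"
proof -
  have "\<forall>row \<in> set P. set row \<subseteq> S" using assms(1) unfolding valid_pattern_def by (rule conjunct1[OF conjunct2[OF conjunct2[OF conjunct2]]])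
  then have "set (P!i) \<subseteq> S" using nth_mem[OF assms(2)] by blast
  moreover have "P!i!j \<in> set (P!i)" using vp_row[OF assms(1,2)] assms(3) by simp
  ultimately show ?thesis by blast
qed
lemma vp_h: "valid_pattern S P \<Longrightarrow> i < length P \<Longrightarrow> j + 1 < length (hd P) \<Longrightarrow> RIGHT (P!i!j) = LEFT (P!i!(j+1))"
  unfolding valid_pattern_def by blast
lemma vp_v: "valid_pattern S P \<Longrightarrow> i + 1 < length P \<Longrightarrow> j < length (hd P) \<Longrightarrow> TOP (P!i!j) = BOTTOM (P!(i+1)!j)"
  unfolding valid_pattern_def by blast
lemma vp_ne: "valid_pattern S P \<Longrightarrow> P \<noteq> [] \<and> hd P \<noteq> []"
  unfolding valid_pattern_def by (rule conjI; elim conjE; assumption)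

lemma vp_left: assumes "valid_pattern S P" "i < length P" shows "left_labels P ! i = LEFT (P!i!0)"
proof -
  have "P!i \<noteq> []" using vp_row[OF assms] vp_ne[OF assms(1)] by auto
  then show ?thesis unfolding left_labels_def using assms(2) by (simp add: hd_conv_nth)
qed
lemma vp_bottom: assumes "valid_pattern S P" "j < length (hd P)" shows "bottom_labels P ! j = BOTTOM (P!0!j)"
  unfolding bottom_labels_def using vp_ne[OF assms(1)] assms(2)
  by (simp add: hd_conv_nth)

lemma uniq:
  assumes P: "valid_pattern S P" and Q: "valid_pattern S Q" and d: "det S"
    and l: "left_labels P = left_labels Q" and b: "bottom_labels P = bottom_labels Q"
  shows "P = Q"
proof -
  define w where "w = length (hd P)"
  have lenP: "length P = length Q" using l unfolding left_labels_def by (metis length_map)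
  have lenw: "length (hd Q) = w" using b unfolding bottom_labels_def w_def by (metis length_map)
  have dd: "t = t'" if "t \<in> S" "t' \<in> S" "LEFT t = LEFT t'" "BOTTOM t = BOTTOM t'" for t t'
    using d that unfolding det_def by blast
  have key: "P!i!j = Q!i!j" if "i < length P" "j < w" for i j
    using that
  proof (induction i arbitrary: j)
    case 0
    then show ?case
    proof (induction j)
      case 0
      show ?case
      proof (rule dd)
        show "P!0!0 \<in> S" using vp_mem[OF P] 0 w_def by auto
        show "Q!0!0 \<in> S" using vp_mem[OF Q] 0 lenP lenw by auto
        show "LEFT (P!0!0) = LEFT (Q!0!0)" using vp_left[OF P, of 0] vp_left[OF Q, of 0] l 0 lenP by auto
        show "BOTTOM (P!0!0) = BOTTOM (Q!0!0)" using vp_bottom[OF P, of 0] vp_bottom[OF Q, of 0] b 0 lenw w_def by auto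
      qed
    next
      case (Suc j)
      show ?case
      proof (rule dd)
        show "P!0!Suc j \<in> S" using vp_mem[OF P] Suc w_def by auto
        show "Q!0!Suc j \<in> S" using vp_mem[OF Q] Suc lenP lenw by auto
        show "LEFT (P!0!Suc j) = LEFT (Q!0!Suc j)"
          using vp_h[OF P, of 0 j] vp_h[OF Q, of 0 j] Suc lenP lenw w_def by auto
        show "BOTTOM (P!0!Suc j) = BOTTOM (Q!0!Suc j)"
          using vp_bottom[OF P, of "Suc j"] vp_bottom[OF Q, of "Suc j"] b Suc lenw w_def by auto
      qed
    qed
  next
    case (Suc i)
    have IH: "P!i!j = Q!i!j" if "j < w" for j using Suc that by simp
    show ?case using Suc.prems(2)
    proof (induction j)
      case 0
      show ?case
      proof (rule dd)
        show "P!Suc i!0 \<in> S" using vp_mem[OF P] Suc.prems 0 w_def by auto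
        show "Q!Suc i!0 \<in> S" using vp_mem[OF Q] Suc.prems 0 lenP lenw by auto
        show "LEFT (P!Suc i!0) = LEFT (Q!Suc i!0)"
          using vp_left[OF P, of "Suc i"] vp_left[OF Q, of "Suc i"] l Suc.prems lenP by auto
        show "BOTTOM (P!Suc i!0) = BOTTOM (Q!Suc i!0)"
          using vp_v[OF P, of i 0] vp_v[OF Q, of i 0] IH[of 0] Suc.prems 0 lenP lenw w_def by auto
      qed
    next
      case (Suc j)
      show ?case
      proof (rule dd)
        show "P!Suc i!Suc j \<in> S" using vp_mem[OF P] \<open>Suc i < length P\<close> Suc w_def by auto
        show "Q!Suc i!Suc j \<in> S" using vp_mem[OF Q] \<open>Suc i < length P\<close> Suc lenP lenw by auto
        show "LEFT (P!Suc i!Suc j) = LEFT (Q!Suc i!Suc j)"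
          using vp_h[OF P, of "Suc i" j] vp_h[OF Q, of "Suc i" j] Suc \<open>Suc i < length P\<close> lenP lenw w_def by auto
        show "BOTTOM (P!Suc i!Suc j) = BOTTOM (Q!Suc i!Suc j)"
          using vp_v[OF P, of i "Suc j"] vp_v[OF Q, of i "Suc j"] IH[of "Suc j"] Suc \<open>Suc i < length P\<close> lenP lenw w_def by auto
      qed
    qed
  qed
  show ?thesis
  proof (rule nth_equalityI)
    show "length P = length Q" by (rule lenP)
    fix i assume i: "i < length P"
    show "P ! i = Q ! i"
    proof (rule nth_equalityI)
      show "length (P!i) = length (Q!i)" using vp_row[OF P i] vp_row[OF Q] i lenP lenw w_def by auto
      fix j assume "j < length (P!i)"
      then show "P!i!j = Q!i!j" using key i vp_row[OF P i] w_def by auto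
    qed
  qed
qed



fun D :: "nat \<Rightarrow> label \<Rightarrow> label \<Rightarrow> tile" where
  "D n (p1,p2,p3) (q1,q2,q3) =
    (if p1 = 1 \<and> q1 = 1 then ((1,1,p3+1),(1,1,q3+1),(p1,p2,p3),(q1,q2,q3))
     else if p1 = 0 \<and> q1 = 1 then ((0, if q3 = int n + 1 then 1 else 0, p3+1), (1,1,1+p2),(p1,p2,p3),(q1,q2,q3))
     else if p1 = 1 \<and> q1 = 0 then ((1,1,1+q2), (0, if p3 = int n + 1 then 1 else 0, q3+1),(p1,p2,p3),(q1,q2,q3))
     else ((0, q3 - int n, q2), (0, p3 - int n, p2), (p1,p2,p3),(q1,q2,q3)))"

abbreviation "DD n t \<equiv> D n (LEFT t) (BOTTOM t)"

lemma D_W: "t \<in> W n \<Longrightarrow> t = DD n t" unfolding W_def by auto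
lemma D_B: "t \<in> B' n \<Longrightarrow> t = DD n t" unfolding B'_def by auto
lemma D_G: "t \<in> G n \<Longrightarrow> t = DD n t" unfolding G_def by auto
lemma D_Y: "t \<in> Y n \<Longrightarrow> t = DD n t" unfolding Y_def by auto
lemma D_A: "t \<in> A n \<Longrightarrow> t = DD n t" unfolding A_def by auto
lemma D_hB: "t \<in> hat ` B' n \<Longrightarrow> t = DD n t" unfolding B'_def by auto
lemma D_hG: "t \<in> hat ` G n \<Longrightarrow> t = DD n t" unfolding G_def by auto
lemma D_hY: "t \<in> hat ` Y n \<Longrightarrow> t = DD n t" unfolding Y_def by auto
lemma D_hA: "t \<in> hat ` A n \<Longrightarrow> t = DD n t" unfolding A_def by auto
lemma D_J: "t \<in> J' n \<Longrightarrow> t = DD n t" unfolding J'_def by auto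

lemma T'_D: assumes "t \<in> T' n" shows "t = DD n t"
  using assms unfolding T'_def
  apply (elim UnE)
  apply (erule D_W)
  apply (erule D_B)
  apply (erule D_G)
  apply (erule D_Y)
  apply (erule D_A)
  apply (erule D_hB)
  apply (erule D_hG)
  apply (erule D_hY)
  apply (erule D_hA)
  apply (erule D_J)
  done

lemma det_T': "det (T' n)"
  unfolding det_def
proof (intro ballI impI)
  fix t t' assume t: "t \<in> T' n" and t': "t' \<in> T' n" and e: "LEFT t = LEFT t' \<and> BOTTOM t = BOTTOM t'"
  have "t = D n (LEFT t) (BOTTOM t)" by (rule T'_D[OF t])
  also have "\<dots> = D n (LEFT t') (BOTTOM t')" using e by simp
  also have "\<dots> = t'" by (rule T'_D[OF t', symmetric])
  finally show "t = t'" .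
qed



definition X :: "int \<Rightarrow> int \<Rightarrow> nat \<Rightarrow> int" where
  "X a c i = (if int i + a + 1 > c then 1 else 0)"
definition RT :: "int \<Rightarrow> int \<Rightarrow> int \<Rightarrow> int \<Rightarrow> int \<Rightarrow> nat \<Rightarrow> nat \<Rightarrow> label" where
  "RT a c b d l i j = (if i = 0 then (0, X b d j, l + int j) else (1, 1, X a c (i - 1) + int j + 1))"
definition TP :: "int \<Rightarrow> int \<Rightarrow> int \<Rightarrow> int \<Rightarrow> int \<Rightarrow> nat \<Rightarrow> nat \<Rightarrow> label" where
  "TP a c b d s i j = (if j = 0 then (0, X a c i, s + int i) else (1, 1, X b d (j - 1) + int i + 1))"
definition LF :: "nat \<Rightarrow> int \<Rightarrow> int \<Rightarrow> int \<Rightarrow> int \<Rightarrow> int \<Rightarrow> int \<Rightarrow> nat \<Rightarrow> nat \<Rightarrow> label" where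
  "LF n a c b d s l i j = (if j = 0 then (if i = 0 then (0, s, X a c 0 + int n) else (1, 1, int n + X a c i))
     else RT a c b d l i (j - 1))"
definition BT :: "nat \<Rightarrow> int \<Rightarrow> int \<Rightarrow> int \<Rightarrow> int \<Rightarrow> int \<Rightarrow> int \<Rightarrow> nat \<Rightarrow> nat \<Rightarrow> label" where
  "BT n a c b d s l i j = (if i = 0 then (if j = 0 then (0, l, X b d 0 + int n) else (1, 1, int n + X b d j))
     else TP a c b d s (i - 1) j)"
definition F :: "nat \<Rightarrow> int \<Rightarrow> int \<Rightarrow> int \<Rightarrow> int \<Rightarrow> int \<Rightarrow> int \<Rightarrow> nat \<Rightarrow> nat \<Rightarrow> tile" where
  "F n a c b d s l i j = (RT a c b d l i j, TP a c b d s i j, LF n a c b d s l i j, BT n a c b d s l i j)"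

lemma X01: "X a c i = 0 \<or> X a c i = 1" unfolding X_def by auto

lemma F_mem:
  assumes n: "n \<ge> 1" and u: "(a, yu, c) \<in> V n" and v: "(b, yv, d) \<in> V n"
    and s: "s = a - yu + 1" and l: "l = b - yv + 1"
    and c1: "c \<ge> int n \<or> b = 1" and c2: "d \<ge> int n \<or> a = 1"
    and i: "i < nat (int n + 1 - a)" and j: "j < nat (int n + 1 - b)"
  shows "F n a c b d s l i j \<in> T' n"
proof -
  have ui: "0 \<le> a" "a \<le> yu" "yu \<le> 1" "yu \<le> c" "c \<le> int n + 1" using u unfolding V_def by auto
  have vi: "0 \<le> b" "b \<le> yv" "yv \<le> 1" "yv \<le> d" "d \<le> int n + 1" using v unfolding V_def by auto
  have ii: "int i < int n + 1 - a" using i by linarith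
  have jj: "int j < int n + 1 - b" using j by linarith
  show ?thesis
  proof (cases "i = 0")
    case i0: True
    show ?thesis
    proof (cases "j = 0")
      case j0: True
      have "F n a c b d s l i j \<in> J' n"
        unfolding J'_def F_def RT_def TP_def LF_def BT_def using i0 j0 ui vi s l
        by (auto simp: X_def)
      then show ?thesis unfolding T'_def by blast
    next
      case j0: False
      define m where "m = l + int j - 1"
      have m: "0 \<le> m" "m \<le> int n" using ui vi jj j0 l unfolding m_def by auto
      have Fe: "F n a c b d s l i j = ((0, X b d j, m + 1), (1,1,X b d (j-1) + 1), (0, X b d (j-1), m), (1,1,int n + X b d j))"
        unfolding F_def RT_def TP_def LF_def BT_def m_def using i0 j0 by (auto simp: of_nat_diff)
      have mono: "X b d (j-1) = 1 \<Longrightarrow> X b d j = 1" unfolding X_def by (auto split: if_splits)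
      have m1: "X b d (j-1) = 1 \<Longrightarrow> 1 \<le> m" unfolding X_def m_def using ui vi l j0 by (auto split: if_splits)
      consider "X b d (j-1) = 0" "X b d j = 0" | "X b d (j-1) = 0" "X b d j = 1" | "X b d (j-1) = 1" "X b d j = 1"
        using X01[of b d j] X01[of b d "j-1"] mono by auto
      then show ?thesis
      proof cases
        case 1
        have "F n a c b d s l i j \<in> B' n" unfolding Fe 1 B'_def using m by auto
        then show ?thesis unfolding T'_def by blast
      next
        case 2
        have "F n a c b d s l i j \<in> G n" unfolding Fe 2 G_def using m by auto
        then show ?thesis unfolding T'_def by blast
      next
        case 3
        have "F n a c b d s l i j \<in> Y n" unfolding Fe 3 Y_def using m m1 3 by auto
        then show ?thesis unfolding T'_def by blast
      qed
    qed
  next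
    case i0: False
    show ?thesis
    proof (cases "j = 0")
      case j0: True
      define m where "m = s + int i - 1"
      have m: "0 \<le> m" "m \<le> int n" using ui vi ii i0 s unfolding m_def by auto
      have Fe: "F n a c b d s l i j = hat ((0, X a c i, m + 1), (1,1,X a c (i-1) + 1), (0, X a c (i-1), m), (1,1,int n + X a c i))"
        unfolding F_def RT_def TP_def LF_def BT_def m_def using i0 j0 by (auto simp: of_nat_diff)
      have mono: "X a c (i-1) = 1 \<Longrightarrow> X a c i = 1" unfolding X_def by (auto split: if_splits)
      have m1: "X a c (i-1) = 1 \<Longrightarrow> 1 \<le> m" unfolding X_def m_def using ui vi s i0 by (auto split: if_splits)
      consider "X a c (i-1) = 0" "X a c i = 0" | "X a c (i-1) = 0" "X a c i = 1" | "X a c (i-1) = 1" "X a c i = 1"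
        using X01[of a c i] X01[of a c "i-1"] mono by auto
      then show ?thesis
      proof cases
        case 1
        have "F n a c b d s l i j \<in> hat ` B' n" unfolding Fe 1 using m by (intro imageI) (auto simp: B'_def)
        then show ?thesis unfolding T'_def by blast
      next
        case 2
        have "F n a c b d s l i j \<in> hat ` G n" unfolding Fe 2 using m by (intro imageI) (auto simp: G_def)
        then show ?thesis unfolding T'_def by blast
      next
        case 3
        have "F n a c b d s l i j \<in> hat ` Y n" unfolding Fe 3 using m m1 3 by (intro imageI) (auto simp: Y_def)
        then show ?thesis unfolding T'_def by blast
      qed
    next
      case j0: False
      define p where "p = X a c (i - 1) + int j"
      define q where "q = X b d (j - 1) + int i"
      have Fe: "F n a c b d s l i j = ((1,1,p+1),(1,1,q+1),(1,1,p),(1,1,q))"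
        unfolding F_def RT_def TP_def LF_def BT_def p_def q_def using i0 j0 by (auto simp: of_nat_diff)
      have p: "1 \<le> p" "p \<le> int n" using c1 ui vi ii jj i0 j0 unfolding p_def X_def by auto
      have q: "1 \<le> q" "q \<le> int n" using c2 ui vi ii jj i0 j0 unfolding q_def X_def by auto
      have "F n a c b d s l i j \<in> W n" unfolding Fe W_def using p q by auto
      then show ?thesis unfolding T'_def by blast
    qed
  qed
qed



definition good :: "nat \<Rightarrow> label \<Rightarrow> label \<Rightarrow> label \<Rightarrow> label \<Rightarrow> bool" where
  "good n \<alpha> \<beta> u v \<longleftrightarrow> (\<exists>P. valid_pattern (T' n) P \<and>
              right_labels P = tau n \<alpha> \<and> top_labels P = tau n \<beta> \<and>
              left_labels P = tau n u \<and> bottom_labels P = tau n v)"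

lemma exist_gen:
  assumes n: "n \<ge> 1" and u: "(a, yu, c) \<in> V n" and v: "(b, yv, d) \<in> V n"
    and c1: "c \<ge> int n \<or> b = 1" and c2: "d \<ge> int n \<or> a = 1"
    and al: "(a, ya, za) \<in> V n" and be: "(b, yb, zb) \<in> V n"
    and hR: "\<forall>i < nat (int n + 1 - a). RT a c b d (b - yv + 1) i (nat (int n - b)) =
       (if i = 0 then (0, a - ya + 1, int n + (if za = a then 1 else 0))
        else (1, 1, int n + (if int i + a + 1 > za then 1 else 0)))"
    and hT: "\<forall>j < nat (int n + 1 - b). TP a c b d (a - yu + 1) (nat (int n - a)) j =
       (if j = 0 then (0, b - yb + 1, int n + (if zb = b then 1 else 0))
        else (1, 1, int n + (if int j + b + 1 > zb then 1 else 0)))"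
  shows "good n (a, ya, za) (b, yb, zb) (a, yu, c) (b, yv, d)"
proof -
  have ui: "0 \<le> a" "a \<le> yu" "yu \<le> 1" "yu \<le> c" "c \<le> int n + 1" using u unfolding V_def by auto
  have vi: "0 \<le> b" "b \<le> yv" "yv \<le> 1" "yv \<le> d" "d \<le> int n + 1" using v unfolding V_def by auto
  define h where "h = nat (int n + 1 - a)"
  define w where "w = nat (int n + 1 - b)"
  define s where "s = a - yu + 1"
  define l where "l = b - yv + 1"
  define f where "f = F n a c b d s l"
  have h0: "h > 0" and w0: "w > 0" using n ui vi unfolding h_def w_def by auto
  have h1: "h - 1 = nat (int n - a)" and w1: "w - 1 = nat (int n - b)" unfolding h_def w_def by auto
  have valid: "valid_pattern (T' n) (mk h w f)"
  proof (rule mk_valid[OF h0 w0])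
    show "\<forall>i<h. \<forall>j<w. f i j \<in> T' n" unfolding f_def h_def w_def
      using F_mem[OF n u v s_def l_def c1 c2] by blast
    show "\<forall>i<h. \<forall>j. j + 1 < w \<longrightarrow> RIGHT (f i j) = LEFT (f i (j + 1))"
      unfolding f_def F_def LF_def by simp
    show "\<forall>i. i + 1 < h \<longrightarrow> (\<forall>j<w. TOP (f i j) = BOTTOM (f (i + 1) j))"
      unfolding f_def F_def BT_def by simp
  qed
  have lab: "right_labels (mk h w f) = tau n (a, ya, za)"
  proof (rule nth_equalityI)
    show "length (right_labels (mk h w f)) = length (tau n (a, ya, za))"
      unfolding mk_labels[OF h0 w0] using tau_len[OF n al] h_def by simp
    fix i assume "i < length (right_labels (mk h w f))"
    then have i: "i < h" unfolding mk_labels[OF h0 w0] by simp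
    show "right_labels (mk h w f) ! i = tau n (a, ya, za) ! i"
      unfolding mk_labels[OF h0 w0] using i tau_nth[OF n al, of i] hR h_def w1
      by (simp add: f_def F_def l_def)
  qed
  moreover have "top_labels (mk h w f) = tau n (b, yb, zb)"
  proof (rule nth_equalityI)
    show "length (top_labels (mk h w f)) = length (tau n (b, yb, zb))"
      unfolding mk_labels[OF h0 w0] using tau_len[OF n be] w_def by simp
    fix j assume "j < length (top_labels (mk h w f))"
    then have j: "j < w" unfolding mk_labels[OF h0 w0] by simp
    show "top_labels (mk h w f) ! j = tau n (b, yb, zb) ! j"
      unfolding mk_labels[OF h0 w0] using j tau_nth[OF n be, of j] hT w_def h1
      by (simp add: f_def F_def s_def)
  qed
  moreover have "left_labels (mk h w f) = tau n (a, yu, c)"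
  proof (rule nth_equalityI)
    show "length (left_labels (mk h w f)) = length (tau n (a, yu, c))"
      unfolding mk_labels[OF h0 w0] using tau_len[OF n u] h_def by simp
    fix i assume "i < length (left_labels (mk h w f))"
    then have i: "i < h" unfolding mk_labels[OF h0 w0] by simp
    show "left_labels (mk h w f) ! i = tau n (a, yu, c) ! i"
      unfolding mk_labels[OF h0 w0] using i tau_nth[OF n u, of i] h_def ui
      by (auto simp: f_def F_def s_def LF_def X_def)
  qed
  moreover have "bottom_labels (mk h w f) = tau n (b, yv, d)"
  proof (rule nth_equalityI)
    show "length (bottom_labels (mk h w f)) = length (tau n (b, yv, d))"
      unfolding mk_labels[OF h0 w0] using tau_len[OF n v] w_def by simp
    fix j assume "j < length (bottom_labels (mk h w f))"
    then have j: "j < w" unfolding mk_labels[OF h0 w0] by simp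
    show "bottom_labels (mk h w f) ! j = tau n (b, yv, d) ! j"
      unfolding mk_labels[OF h0 w0] using j tau_nth[OF n v, of j] w_def vi
      by (auto simp: f_def F_def l_def BT_def X_def)
  qed
  ultimately show ?thesis unfolding good_def using valid by blast
qed



lemma g_W: assumes "n \<ge> 1" "1 \<le> i" "i \<le> int n" "1 \<le> j" "j \<le> int n"
  shows "good n (1,1,i+1) (1,1,j+1) (1,1,i) (1,1,j)"
  using assms by (intro exist_gen) (auto simp: V_def RT_def TP_def X_def)

lemma g_B: assumes "n \<ge> 1" "0 \<le> i" "i \<le> int n"
  shows "good n (0,0,i+1) (1,1,1) (0,0,i) (1,1,int n)"
  using assms by (intro exist_gen) (auto simp: V_def RT_def TP_def X_def)

lemma g_G: assumes "n \<ge> 1" "0 \<le> i" "i \<le> int n"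
  shows "good n (0,1,i+1) (1,1,1) (0,0,i) (1,1,int n + 1)"
  using assms by (intro exist_gen) (auto simp: V_def RT_def TP_def X_def)

lemma g_Y: assumes "n \<ge> 1" "1 \<le> i" "i \<le> int n"
  shows "good n (0,1,i+1) (1,1,2) (0,1,i) (1,1,int n + 1)"
  using assms by (intro exist_gen) (auto simp: V_def RT_def TP_def X_def)

lemma g_A: assumes "n \<ge> 1" "1 \<le> i" "i \<le> int n"
  shows "good n (0,0,i+1) (1,1,2) (0,1,i) (1,1,int n)"
  using assms by (intro exist_gen) (auto simp: V_def RT_def TP_def X_def)

lemma g_hB: assumes "n \<ge> 1" "0 \<le> i" "i \<le> int n"
  shows "good n (1,1,1) (0,0,i+1) (1,1,int n) (0,0,i)"
  using assms by (intro exist_gen) (auto simp: V_def RT_def TP_def X_def)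

lemma g_hG: assumes "n \<ge> 1" "0 \<le> i" "i \<le> int n"
  shows "good n (1,1,1) (0,1,i+1) (1,1,int n + 1) (0,0,i)"
  using assms by (intro exist_gen) (auto simp: V_def RT_def TP_def X_def)

lemma g_hY: assumes "n \<ge> 1" "1 \<le> i" "i \<le> int n"
  shows "good n (1,1,2) (0,1,i+1) (1,1,int n + 1) (0,1,i)"
  using assms by (intro exist_gen) (auto simp: V_def RT_def TP_def X_def)

lemma g_hA: assumes "n \<ge> 1" "1 \<le> i" "i \<le> int n"
  shows "good n (1,1,2) (0,0,i+1) (1,1,int n) (0,1,i)"
  using assms by (intro exist_gen) (auto simp: V_def RT_def TP_def X_def)

lemma g_J: assumes "n \<ge> 1" "(k, l) \<in> {(0,0),(0,1),(1,1)}" "(r, s) \<in> {(0,0),(0,1),(1,1)}"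
  shows "good n (0,k,l) (0,r,s) (0,s,r + int n) (0,l,k + int n)"
  using assms by (intro exist_gen) (auto simp: V_def RT_def TP_def X_def)



lemma good_T': assumes n: "n \<ge> 1" and t: "(\<alpha>, \<beta>, u, v) \<in> T' n" shows "good n \<alpha> \<beta> u v"
  using t unfolding T'_def
  apply (elim UnE)
  subgoal unfolding W_def using g_W[OF n] by auto
  subgoal unfolding B'_def using g_B[OF n] by auto
  subgoal unfolding G_def using g_G[OF n] by auto
  subgoal unfolding Y_def using g_Y[OF n] by auto
  subgoal unfolding A_def using g_A[OF n] by auto
  subgoal unfolding B'_def using g_hB[OF n] by auto
  subgoal unfolding G_def using g_hG[OF n] by auto
  subgoal unfolding Y_def using g_hY[OF n] by auto
  subgoal unfolding A_def using g_hA[OF n] by auto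
  subgoal unfolding J'_def using g_J[OF n] by auto
  done

theorem lemma5p3:
  fixes n :: nat and \<alpha> \<beta> u v :: label
  assumes "n \<ge> 1"
    and "\<alpha> \<in> V n" and "\<beta> \<in> V n" and "u \<in> V n" and "v \<in> V n"
    and "(\<alpha>, \<beta>, u, v) \<in> T' n"
  shows "\<exists>!P. valid_pattern (T' n) P \<and>
              right_labels P = tau n \<alpha> \<and> top_labels P = tau n \<beta> \<and>
              left_labels P = tau n u \<and> bottom_labels P = tau n v"
proof -
  obtain P where P: "valid_pattern (T' n) P \<and>
              right_labels P = tau n \<alpha> \<and> top_labels P = tau n \<beta> \<and>
              left_labels P = tau n u \<and> bottom_labels P = tau n v"
    using good_T'[OF assms(1,6)] unfolding good_def by blast
  show ?thesis
  proof (rule ex1I[of _ P])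
    show "valid_pattern (T' n) P \<and>
              right_labels P = tau n \<alpha> \<and> top_labels P = tau n \<beta> \<and>
              left_labels P = tau n u \<and> bottom_labels P = tau n v" by (rule P)
    fix Q assume Q: "valid_pattern (T' n) Q \<and>
              right_labels Q = tau n \<alpha> \<and> top_labels Q = tau n \<beta> \<and>
              left_labels Q = tau n u \<and> bottom_labels Q = tau n v"
    show "Q = P"
      using uniq[of "T' n" Q P] Q P det_T' by simp
  qed
qed

end
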